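(* Let $\mathcal J_1=(J_1,R_1,\sigma_1)$ and $\mathcal J_2=(J_2,R_2,\sigma_2)$ form a generalized Kähler structure on a real $4$-dimensional Lie algebra $\mathfrak g$, and assume neither $\mathcal J_1$ nor $\mathcal J_2$ is of type $2$. Then either $\mathcal J_1$ and $\mathcal J_2$ are both of type $0$, or both are of type $1$; in the latter case $\operatorname{Im}R_1\cap\operatorname{Im}R_2=\{0\}$.
   Context: Let $\mathfrak g$ be a real finite-dimensional Lie algebra, $\Phi(\mathfrak g)=\mathfrak g\oplus\mathfrak g^*$ with the neutral pairing $\langle u+\alpha,v+\beta\rangle=\tfrac12(\alpha(v)+\beta(u))$ and the bracket $[u+\alpha,v+\beta]=[u,v]+\mathrm{ad}_u^t\beta-\mathrm{ad}_v^t\alpha$, where $(\mathrm{ad}_u^t\alpha)(v)=-\alpha([u,v])$. A generalized complex structure on $\mathfrak g$ is an endomorphism $K$ of $\Phi(\mathfrak g)$ with $K^2=-\mathrm{Id}$, $\langle Ka,b\rangle+\langle a,Kb\rangle=0$ for all $a,b$, and vanishing Nijenhuis torsion $N_K(a,b)=[Ka,Kb]-K[Ka,b]-K[a,Kb]+K^2[a,b]$; it is written $K=\begin{pmatrix}J&R\\ \sigma&-J^*\end{pmatrix}$ and denoted $(J,R,\sigma)$. Its type is $\tfrac12\dim(\operatorname{Im}R)^0$; in dimension 4 type 0 means $R$ invertible, type 1 means $\operatorname{rank}R=2$, type 2 means $R=0$. A generalized Kähler structure on $\mathfrak g$ is a pair of commuting generalized complex structures $\mathcal J_1,\mathcal J_2$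 such that the symmetric form $G(u,v)=\langle\mathcal J_1\mathcal J_2u,v\rangle$ on $\Phi(\mathfrak g)$ is positive definite. *)

theory Defs
  imports "HOL-Analysis.Analysis"
begin

text \<open>The Lie algebra g is modelled as R^4 (type real^4) with a bracket br.
  The dual g* is also modelled as real^4, a covector alpha acting by alpha(v) = alpha \<bullet> v.
  Phi(g) = g (+) g* is modelled as real^4 \<times> real^4.\<close>

type_synonym vec4 = "real^4"
type_synonym phi4 = "vec4 \<times> vec4"

definition lie_algebra :: "(vec4 \<Rightarrow> vec4 \<Rightarrow> vec4) \<Rightarrow> bool" where
  "lie_algebra br \<longleftrightarrow> bilinear br \<and> (\<forall>u. br u u = 0) \<and>
     (\<forall>u v w. br u (br v w) + br v (br w u) + br w (br u v) = 0)"

definition adt :: "(vec4 \<Rightarrow> vec4 \<Rightarrow> vec4) \<Rightarrow> vec4 \<Rightarrow> vec4 \<Rightarrow> vec4" where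
  "adt br u \<alpha> = (\<chi> i. - (\<alpha> \<bullet> br u (axis i 1)))"

definition phi_pair :: "phi4 \<Rightarrow> phi4 \<Rightarrow> real" where
  "phi_pair a b = ((snd a) \<bullet> (fst b) + (snd b) \<bullet> (fst a)) / 2"

definition phi_bracket :: "(vec4 \<Rightarrow> vec4 \<Rightarrow> vec4) \<Rightarrow> phi4 \<Rightarrow> phi4 \<Rightarrow> phi4" where
  "phi_bracket br a b =
     (br (fst a) (fst b), adt br (fst a) (snd b) - adt br (fst b) (snd a))"

definition nijenhuis :: "(vec4 \<Rightarrow> vec4 \<Rightarrow> vec4) \<Rightarrow> (phi4 \<Rightarrow> phi4) \<Rightarrow> phi4 \<Rightarrow> phi4 \<Rightarrow> phi4" where
  "nijenhuis br K a b = phi_bracket br (K a) (K b) - K (phi_bracket br (K a) b)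
      - K (phi_bracket br a (K b)) + K (K (phi_bracket br a b))"

definition gen_complex :: "(vec4 \<Rightarrow> vec4 \<Rightarrow> vec4) \<Rightarrow> (phi4 \<Rightarrow> phi4) \<Rightarrow> bool" where
  "gen_complex br K \<longleftrightarrow> linear K \<and> (\<forall>a. K (K a) = - a) \<and>
     (\<forall>a b. phi_pair (K a) b + phi_pair a (K b) = 0) \<and>
     (\<forall>a b. nijenhuis br K a b = 0)"

text \<open>The block R : g* \<rightarrow> g of K = (J R; sigma -J*).\<close>
definition gc_R :: "(phi4 \<Rightarrow> phi4) \<Rightarrow> vec4 \<Rightarrow> vec4" where
  "gc_R K \<alpha> = fst (K (0, \<alpha>))"

definition gc_type :: "(phi4 \<Rightarrow> phi4) \<Rightarrow> nat" where
  "gc_type K = dim {\<alpha>::vec4. \<forall>x \<in> range (gc_R K). \<alpha> \<bullet> x = 0} div 2"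

definition gen_kahler :: "(vec4 \<Rightarrow> vec4 \<Rightarrow> vec4) \<Rightarrow> (phi4 \<Rightarrow> phi4) \<Rightarrow> (phi4 \<Rightarrow> phi4) \<Rightarrow> bool" where
  "gen_kahler br K1 K2 \<longleftrightarrow> gen_complex br K1 \<and> gen_complex br K2 \<and>
     (\<forall>a. K1 (K2 a) = K2 (K1 a)) \<and>
     (\<forall>a. a \<noteq> 0 \<longrightarrow> phi_pair (K1 (K2 a)) a > 0)"

end

theory Submission imports Defs begin
lemma indep_orth:
  fixes S :: "'a::euclidean_space \<Rightarrow> 'a" and B :: "'a set"
  assumes lS: "linear S" and fin: "finite B"
    and nz: "\<And>x. x \<in> B \<Longrightarrow> x \<bullet> S x \<noteq> 0"
    and orth: "\<And>x y. x \<in> B \<Longrightarrow> y \<in> B \<Longrightarrow> x \<noteq> y \<Longrightarrow> x \<bullet> S y = 0"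
  shows "independent B"
proof (rule independent_if_scalars_zero[OF fin])
  fix f x assume s: "(\<Sum>x\<in>B. f x *\<^sub>R x) = 0" and x: "x \<in> B"
  have "x \<bullet> S (\<Sum>y\<in>B. f y *\<^sub>R y) = (\<Sum>y\<in>B. f y * (x \<bullet> S y))"
    by (simp add: linear_sum[OF lS] linear_scale[OF lS] inner_sum_right)
  also have "\<dots> = f x * (x \<bullet> S x) + (\<Sum>y\<in>B-{x}. f y * (x \<bullet> S y))"
    using fin x by (simp add: sum.remove)
  also have "(\<Sum>y\<in>B-{x}. f y * (x \<bullet> S y)) = 0"
    by (rule sum.neutral) (use orth x in auto)
  finally have "f x * (x \<bullet> S x) = 0" using s linear_0[OF lS] by simp
  then show "f x = 0" using nz[OF x] by simp
qed

lemma vanish4: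
  fixes S :: "real^4 \<Rightarrow> real^4"
  assumes lS: "linear S" and sym: "\<And>x y. y \<bullet> S x = x \<bullet> S y"
    and pos: "\<And>x. x \<noteq> 0 \<Longrightarrow> x \<bullet> S x > 0"
    and nz: "u1 \<noteq> 0" "u2 \<noteq> 0" "u3 \<noteq> 0" "u4 \<noteq> 0"
    and o: "u1 \<bullet> S u2 = 0" "u1 \<bullet> S u3 = 0" "u1 \<bullet> S u4 = 0"
      "u2 \<bullet> S u3 = 0" "u2 \<bullet> S u4 = 0" "u3 \<bullet> S u4 = 0"
    and ov: "v \<bullet> S u1 = 0" "v \<bullet> S u2 = 0" "v \<bullet> S u3 = 0" "v \<bullet> S u4 = 0"
  shows "v = 0"
proof (rule ccontr)
  assume v: "v \<noteq> 0"
  have p: "u1 \<bullet> S u1 > 0" "u2 \<bullet> S u2 > 0" "u3 \<bullet> S u3 > 0" "u4 \<bullet> S u4 > 0" "v \<bullet> S v > 0"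
    using pos nz v by auto
  have o2: "u2 \<bullet> S u1 = 0" "u3 \<bullet> S u1 = 0" "u4 \<bullet> S u1 = 0"
      "u3 \<bullet> S u2 = 0" "u4 \<bullet> S u2 = 0" "u4 \<bullet> S u3 = 0"
      "u1 \<bullet> S v = 0" "u2 \<bullet> S v = 0" "u3 \<bullet> S v = 0" "u4 \<bullet> S v = 0"
    using o ov sym by metis+
  have d: "u1 \<noteq> u2" "u1 \<noteq> u3" "u1 \<noteq> u4" "u2 \<noteq> u3" "u2 \<noteq> u4" "u3 \<noteq> u4"
    "v \<noteq> u1" "v \<noteq> u2" "v \<noteq> u3" "v \<noteq> u4"
    using p o ov by force+
  let ?B = "{u1,u2,u3,u4,v}"
  have "independent ?B"
    apply (rule indep_orth[OF lS])
    using p o ov o2 by auto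
  then have "card ?B \<le> DIM(real^4)" using independent_bound by blast
  moreover have "card ?B = 5" using d by auto
  ultimately show False by simp
qed

lemma expand4:
  fixes S :: "real^4 \<Rightarrow> real^4"
  assumes lS: "linear S" and sym: "\<And>x y. y \<bullet> S x = x \<bullet> S y"
    and pos: "\<And>x. x \<noteq> 0 \<Longrightarrow> x \<bullet> S x > 0"
    and nz: "u1 \<noteq> 0" "u2 \<noteq> 0" "u3 \<noteq> 0" "u4 \<noteq> 0"
    and o: "u1 \<bullet> S u2 = 0" "u1 \<bullet> S u3 = 0" "u1 \<bullet> S u4 = 0"
      "u2 \<bullet> S u3 = 0" "u2 \<bullet> S u4 = 0" "u3 \<bullet> S u4 = 0"
  shows "\<exists>c1 c2 c3 c4. v = c1 *\<^sub>R u1 + c2 *\<^sub>R u2 + c3 *\<^sub>R u3 + c4 *\<^sub>R u4"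
proof -
  have p: "u1 \<bullet> S u1 > 0" "u2 \<bullet> S u2 > 0" "u3 \<bullet> S u3 > 0" "u4 \<bullet> S u4 > 0"
    using pos nz by auto
  have o2: "u2 \<bullet> S u1 = 0" "u3 \<bullet> S u1 = 0" "u4 \<bullet> S u1 = 0"
      "u3 \<bullet> S u2 = 0" "u4 \<bullet> S u2 = 0" "u4 \<bullet> S u3 = 0"
    using o sym by metis+
  define c1 where "c1 = (v \<bullet> S u1) / (u1 \<bullet> S u1)"
  define c2 where "c2 = (v \<bullet> S u2) / (u2 \<bullet> S u2)"
  define c3 where "c3 = (v \<bullet> S u3) / (u3 \<bullet> S u3)"
  define c4 where "c4 = (v \<bullet> S u4) / (u4 \<bullet> S u4)"
  define w where "w = v - (c1 *\<^sub>R u1 + c2 *\<^sub>R u2 + c3 *\<^sub>R u3 + c4 *\<^sub>R u4)"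
  have "w \<bullet> S u1 = 0" "w \<bullet> S u2 = 0" "w \<bullet> S u3 = 0" "w \<bullet> S u4 = 0"
    using p o o2 by (simp_all add: w_def c1_def c2_def c3_def c4_def inner_diff_left inner_add_left)
  then have "w = 0" using vanish4[OF lS sym pos nz o] by blast
  then show ?thesis unfolding w_def by (metis eq_iff_diff_eq_0)
qed
lemma core:
  fixes S J K :: "real^4 \<Rightarrow> real^4"
  assumes lS: "linear S" and lJ: "linear J" and lK: "linear K"
    and sym: "\<And>x y. y \<bullet> S x = x \<bullet> S y"
    and pos: "\<And>x. x \<noteq> 0 \<Longrightarrow> x \<bullet> S x > 0"
    and JJ: "\<And>x. J (J x) = - x" and KK: "\<And>x. K (K x) = - x"
    and Jo: "\<And>x y. J y \<bullet> S (J x) = y \<bullet> S x"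
    and Ko: "\<And>x y. K y \<bullet> S (K x) = y \<bullet> S x"
    and a: "J a = K a" "a \<noteq> 0"
    and notall: "\<exists>x. J x \<noteq> K x"
  shows "\<exists>e f. v = e + f \<and> J e = K e \<and> J f = - K f"
proof -
  have Sm: "\<And>x. S (- x) = - S x" using linear_neg[OF lS] .
  have Jm: "\<And>x. J (- x) = - J x" using linear_neg[OF lJ] .
  have Km: "\<And>x. K (- x) = - K x" using linear_neg[OF lK] .
  have skJ: "\<And>x. x \<bullet> S (J x) = 0"
  proof -
    fix x
    have "x \<bullet> S (J x) = J x \<bullet> S (J (J x))" using Jo by metis
    also have "\<dots> = - (J x \<bullet> S x)" by (simp add: JJ Sm)
    also have "\<dots> = - (x \<bullet> S (J x))" using sym by metis
    finally show "x \<bullet> S (J x) = 0" by simp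
  qed
  have skK: "\<And>x. x \<bullet> S (K x) = 0"
  proof -
    fix x
    have "x \<bullet> S (K x) = K x \<bullet> S (K (K x))" using Ko by metis
    also have "\<dots> = - (K x \<bullet> S x)" by (simp add: KK Sm)
    also have "\<dots> = - (x \<bullet> S (K x))" using sym by metis
    finally show "x \<bullet> S (K x) = 0" by simp
  qed
  have Jnz: "\<And>x. x \<noteq> 0 \<Longrightarrow> J x \<noteq> 0"
    by (metis JJ linear_0[OF lJ] neg_equal_0_iff_equal)
  define b where "b = J a"
  have bnz: "b \<noteq> 0" using Jnz a(2) unfolding b_def by blast
  have Jb: "J b = - a" by (simp add: b_def JJ)
  have Kb: "K b = - a" by (simp add: b_def a KK)
  have ab: "a \<bullet> S b = 0" using skJ by (simp add: b_def)
  obtain y where y: "y \<noteq> 0" "\<And>u. u \<in> span {S a, S b} \<Longrightarrow> orthogonal y u"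
  proof (rule orthogonal_to_subspace_exists[of "{S a, S b}"])
    have "dim {S a, S b} \<le> card {S a, S b}" by (rule dim_le_card') simp
    also have "\<dots> \<le> 2" by (simp add: card_insert_le_m1)
    finally show "dim {S a, S b} < DIM(real^4)" by simp
  qed blast
  have ya: "y \<bullet> S a = 0" and yb: "y \<bullet> S b = 0"
    using y(2)[of "S a"] y(2)[of "S b"] by (auto simp: orthogonal_def span_base)
  define z where "z = J y"
  define w where "w = K y"
  have znz: "z \<noteq> 0" using Jnz y by (simp add: z_def)
  have az: "a \<bullet> S z = 0"
  proof -
    have "a \<bullet> S z = J a \<bullet> S (J (J y))" using Jo by (metis z_def)
    also have "\<dots> = - (b \<bullet> S y)" by (simp add: JJ Sm b_def)
    moreover have "b \<bullet> S y = 0" using yb sym by metis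
    ultimately show ?thesis by simp
  qed
  have bz: "b \<bullet> S z = 0"
    using Jo ya sym by (metis b_def z_def)
  have yz: "y \<bullet> S z = 0" using skJ by (simp add: z_def)
  have aw: "a \<bullet> S w = 0"
  proof -
    have "a \<bullet> S w = K a \<bullet> S (K (K y))" using Ko by (metis w_def)
    also have "\<dots> = - (b \<bullet> S y)" by (simp add: KK Sm b_def a)
    moreover have "b \<bullet> S y = 0" using yb sym by metis
    ultimately show ?thesis by simp
  qed
  have bw: "b \<bullet> S w = 0"
    using Ko ya sym a by (metis b_def w_def)
  have yw: "y \<bullet> S w = 0" using skK by (simp add: w_def)
  have zpos: "z \<bullet> S z > 0" using pos znz by simp
  define c where "c = (z \<bullet> S w) / (z \<bullet> S z)"
  define u where "u = w - c *\<^sub>R z"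
  have Su: "S u = S w - c *\<^sub>R S z"
    by (simp add: u_def linear_diff[OF lS] linear_scale[OF lS])
  have "u \<bullet> S a = 0" "u \<bullet> S b = 0" "u \<bullet> S y = 0" "u \<bullet> S z = 0"
  proof -
    show "u \<bullet> S a = 0" using sym aw az by (metis Su inner_diff_right inner_scaleR_right mult_zero_right diff_self)
    show "u \<bullet> S b = 0" using sym bw bz by (metis Su inner_diff_right inner_scaleR_right mult_zero_right diff_self)
    show "u \<bullet> S y = 0" using sym yw yz by (metis Su inner_diff_right inner_scaleR_right mult_zero_right diff_self)
    have "z \<bullet> S u = 0" using zpos by (simp add: Su c_def inner_diff_right)
    then show "u \<bullet> S z = 0" using sym by metis
  qed
  then have "u = 0"
    using vanish4[OF lS sym pos a(2) bnz y(1) znz ab _ az _ bz yz] ya yb sym by metis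
  then have wz: "w = c *\<^sub>R z" by (simp add: u_def)
  have "y \<bullet> S y = w \<bullet> S w" using Ko by (metis w_def)
  also have "\<dots> = c^2 * (z \<bullet> S z)"
    by (simp add: wz linear_scale[OF lS] power2_eq_square)
  also have "z \<bullet> S z = y \<bullet> S y" using Jo by (metis z_def)
  finally have "c^2 = 1" using pos[OF y(1)] by simp
  then have "c = 1 \<or> c = -1" by (simp add: power2_eq_1_iff)
  then show ?thesis
  proof
    assume c1: "c = 1"
    then have Ky: "K y = J y" using wz by (simp add: w_def z_def)
    have Jz: "J z = K z"
    proof -
      have "J z = - y" by (simp add: z_def JJ)
      moreover have "K z = - y" using Ky KK by (metis z_def)
      ultimately show ?thesis by simp
    qed
    have allE: "J x = K x" for x
    proof -
      obtain c1 c2 c3 c4 where x: "x = c1 *\<^sub>R a + c2 *\<^sub>R b + c3 *\<^sub>R y + c4 *\<^sub>R z"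
        using expand4[OF lS sym pos a(2) bnz y(1) znz ab _ az _ bz yz] ya yb sym by metis
      show ?thesis unfolding x
        by (simp add: linear_add[OF lJ] linear_add[OF lK] linear_scale[OF lJ] linear_scale[OF lK]
            a Jb Kb Ky Jz)
    qed
    then show ?thesis using notall by blast
  next
    assume c1: "c = -1"
    then have Ky: "K y = - J y" using wz by (simp add: w_def z_def)
    have Jz: "J z = - K z"
    proof -
      have "J z = - y" by (simp add: z_def JJ)
      moreover have "J y = - K y" using Ky by simp
      then have "K z = y" using KK Km by (simp add: z_def)
      ultimately show ?thesis by simp
    qed
    obtain c1 c2 c3 c4 where x: "v = c1 *\<^sub>R a + c2 *\<^sub>R b + c3 *\<^sub>R y + c4 *\<^sub>R z"
      using expand4[OF lS sym pos a(2) bnz y(1) znz ab _ az _ bz yz] ya yb sym by metis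
    show ?thesis
    proof (intro exI conjI)
      show "v = (c1 *\<^sub>R a + c2 *\<^sub>R b) + (c3 *\<^sub>R y + c4 *\<^sub>R z)" using x by (simp add: algebra_simps)
      show "J (c1 *\<^sub>R a + c2 *\<^sub>R b) = K (c1 *\<^sub>R a + c2 *\<^sub>R b)"
        by (simp add: linear_add[OF lJ] linear_add[OF lK] linear_scale[OF lJ] linear_scale[OF lK] a Jb Kb)
      show "J (c3 *\<^sub>R y + c4 *\<^sub>R z) = - K (c3 *\<^sub>R y + c4 *\<^sub>R z)"
        by (simp add: linear_add[OF lJ] linear_add[OF lK] linear_scale[OF lJ] linear_scale[OF lK] Ky Jz)
    qed
  qed
qed
lemma pp_add_left: "phi_pair (a + b) c = phi_pair a c + phi_pair b c"
  by (simp add: phi_pair_def inner_add_left inner_add_right add_divide_distrib)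
lemma pp_add_right: "phi_pair c (a + b) = phi_pair c a + phi_pair c b"
  by (simp add: phi_pair_def inner_add_left inner_add_right add_divide_distrib)
lemma pp_scale_left: "phi_pair (r *\<^sub>R a) c = r * phi_pair a c"
  by (simp add: phi_pair_def algebra_simps)
lemma pp_scale_right: "phi_pair c (r *\<^sub>R a) = r * phi_pair c a"
  by (simp add: phi_pair_def algebra_simps)
lemma pp_neg_left: "phi_pair (- a) c = - phi_pair a c"
  by (simp add: phi_pair_def algebra_simps)
lemma pp_neg_right: "phi_pair c (- a) = - phi_pair c a"
  by (simp add: phi_pair_def algebra_simps)
lemma pp_sym: "phi_pair a b = phi_pair b a"
  by (simp add: phi_pair_def algebra_simps)
lemma pp_L: "phi_pair (0, \<alpha>) (0, \<beta>) = 0"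
  by (simp add: phi_pair_def)
lemma pp_L2: "phi_pair x (0, \<beta>) = (\<beta> \<bullet> fst x) / 2"
  by (simp add: phi_pair_def)
lemma pp_self_fst0: "fst d = 0 \<Longrightarrow> phi_pair d d = 0"
  by (simp add: phi_pair_def)

locale gk =
  fixes K1 K2 :: "phi4 \<Rightarrow> phi4"
  assumes lin1: "linear K1" and lin2: "linear K2"
    and sq1: "\<And>a. K1 (K1 a) = - a" and sq2: "\<And>a. K2 (K2 a) = - a"
    and sk1: "\<And>a b. phi_pair (K1 a) b + phi_pair a (K1 b) = 0"
    and sk2: "\<And>a b. phi_pair (K2 a) b + phi_pair a (K2 b) = 0"
    and comm: "\<And>a. K1 (K2 a) = K2 (K1 a)"
    and pos: "\<And>a. a \<noteq> 0 \<Longrightarrow> phi_pair (K1 (K2 a)) a > 0"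
begin

definition G where "G x = K1 (K2 x)"
definition S where "S \<alpha> = fst (G (0, \<alpha>))"
definition Si where "Si = inv S"
definition Je where "Je eps \<alpha> = Si (eps *\<^sub>R (gc_R K1 \<alpha> - eps *\<^sub>R gc_R K2 \<alpha>))"
definition U where "U eps \<beta> = (0, \<beta>) + eps *\<^sub>R G (0, \<beta>)"

lemma linG: "linear G"
  unfolding G_def[abs_def] using linear_compose[OF lin2 lin1] by (simp add: o_def)

lemma GG: "G (G x) = x"
  by (simp add: G_def comm[symmetric] sq1 sq2 linear_neg[OF lin1])
  
lemma GK1: "G (K1 c) = K1 (G c)"
  by (simp add: G_def comm)

lemma pK1: "phi_pair (K1 a) (K1 b) = phi_pair a b"
  using sk1[of a "K1 b"] by (simp add: sq1 pp_neg_right)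
lemma pK2: "phi_pair (K2 a) (K2 b) = phi_pair a b"
  using sk2[of a "K2 b"] by (simp add: sq2 pp_neg_right)
lemma pGsym: "phi_pair (G a) b = phi_pair a (G b)"
proof -
  have "phi_pair (K1 (K2 a)) b = - phi_pair (K2 a) (K1 b)" using sk1[of "K2 a" b] by simp
  also have "\<dots> = phi_pair a (K2 (K1 b))" using sk2[of a "K1 b"] by simp
  finally show ?thesis by (simp add: G_def comm)
qed
lemma pGG: "phi_pair (G a) (G b) = phi_pair a b"
  by (simp add: G_def pK1 pK2)

lemma linS: "linear S"
proof -
  have "linear (\<lambda>\<alpha>::vec4. (0::vec4, \<alpha>))" by (rule linearI) auto
  then have "linear (\<lambda>\<alpha>. G (0::vec4, \<alpha>))" using linear_compose[OF _ linG] by (simp add: o_def)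
  then show ?thesis unfolding S_def[abs_def] using linear_compose[OF _ linear_fst] by (simp add: o_def)
qed

lemma linR: "linear K \<Longrightarrow> linear (gc_R K)"
proof -
  assume lK: "linear K"
  have "linear (\<lambda>\<alpha>::vec4. (0::vec4, \<alpha>))" by (rule linearI) auto
  then have "linear (\<lambda>\<alpha>. K (0::vec4, \<alpha>))" using linear_compose[OF _ lK] by (simp add: o_def)
  then show ?thesis unfolding gc_R_def[abs_def] using linear_compose[OF _ linear_fst] by (simp add: o_def)
qed

lemma hS: "phi_pair (G (0, \<alpha>)) (0, \<beta>) = (\<beta> \<bullet> S \<alpha>) / 2"
  by (simp add: pp_L2 S_def)

lemma Ssym: "\<beta> \<bullet> S \<alpha> = \<alpha> \<bullet> S \<beta>"
proof -
  have "phi_pair (G (0,\<alpha>)) (0,\<beta>) = phi_pair (G (0,\<beta>)) (0,\<alpha>)"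
    using pGsym[of "(0,\<alpha>)" "(0,\<beta>)"] pp_sym by metis
  then show ?thesis using hS[of \<alpha> \<beta>] hS[of \<beta> \<alpha>] by simp
qed

lemma Spos: "\<alpha> \<noteq> 0 \<Longrightarrow> \<alpha> \<bullet> S \<alpha> > 0"
proof -
  assume "\<alpha> \<noteq> 0"
  then have "(0::vec4, \<alpha>) \<noteq> 0" by (simp add: zero_prod_def)
  then show ?thesis using pos[of "(0,\<alpha>)"] hS[of \<alpha> \<alpha>] by (simp add: G_def)
qed

lemma Sinj: "inj S"
proof (rule injI)
  fix x y assume "S x = S y"
  then have "S (x - y) = 0" by (simp add: linear_diff[OF linS])
  then show "x = y" using Spos[of "x - y"] by fastforce
qed

lemma Ssurj: "surj S" using linear_inj_imp_surj[OF linS Sinj] .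
lemma SSi: "S (Si x) = x" unfolding Si_def using surj_f_inv_f[OF Ssurj] .
lemma SiS: "Si (S x) = x" unfolding Si_def using inv_f_f[OF Sinj] .
lemma linSi: "linear Si" unfolding Si_def using inj_linear_imp_inv_linear[OF linS Sinj] .

lemma linJe: "linear (Je eps)"
proof -
  have "linear (\<lambda>\<alpha>. eps *\<^sub>R (gc_R K1 \<alpha> - eps *\<^sub>R gc_R K2 \<alpha>))"
    using linR[OF lin1] linR[OF lin2]
    by (intro linear_compose_scale_right linear_compose_sub linear_compose_scale_right) auto
  then show ?thesis unfolding Je_def[abs_def] using linear_compose[OF _ linSi] by (simp add: o_def)
qed

context
  fixes eps :: real assumes eps: "eps * eps = 1"
begin

lemma GU: "G (U eps \<beta>) = eps *\<^sub>R U eps \<beta>"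
  by (simp add: U_def linear_add[OF linG] linear_scale[OF linG] GG scaleR_add_right eps)

lemma fstU: "fst (U eps \<beta>) = eps *\<^sub>R S \<beta>"
  by (simp add: U_def S_def)

lemma uniq: assumes "G c = eps *\<^sub>R c" "G c' = eps *\<^sub>R c'" "fst c = fst c'" shows "c = c'"
proof (rule ccontr)
  let ?d = "c - c'"
  assume "c \<noteq> c'"
  then have "?d \<noteq> 0" by simp
  then have "phi_pair (G ?d) ?d > 0" using pos by (simp add: G_def)
  moreover have "G ?d = eps *\<^sub>R ?d" using assms by (simp add: linear_diff[OF linG] scaleR_diff_right)
  moreover have "phi_pair ?d ?d = 0" using assms(3) by (intro pp_self_fst0) simp
  ultimately show False by (simp add: pp_scale_left)
qed

lemma UJ: "U eps (Je eps \<alpha>) = K1 (U eps \<alpha>)"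
proof (rule uniq)
  show "G (U eps (Je eps \<alpha>)) = eps *\<^sub>R U eps (Je eps \<alpha>)" by (rule GU)
  show "G (K1 (U eps \<alpha>)) = eps *\<^sub>R K1 (U eps \<alpha>)" by (simp add: GK1 GU linear_scale[OF lin1])
  have "fst (U eps (Je eps \<alpha>)) = gc_R K1 \<alpha> - eps *\<^sub>R gc_R K2 \<alpha>"
    by (simp add: fstU Je_def SSi eps)
  moreover have "fst (K1 (U eps \<alpha>)) = gc_R K1 \<alpha> - eps *\<^sub>R gc_R K2 \<alpha>"
    by (simp add: U_def linear_add[OF lin1] linear_scale[OF lin1] G_def sq1 gc_R_def)
  ultimately show "fst (U eps (Je eps \<alpha>)) = fst (K1 (U eps \<alpha>))" by simp
qed

lemma Uinj: "U eps x = U eps y \<Longrightarrow> x = y"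
proof -
  assume "U eps x = U eps y"
  then have "eps *\<^sub>R S x = eps *\<^sub>R S y" using fstU by metis
  then have "S x = S y" using eps by (metis scaleR_cancel_left mult_zero_left zero_neq_one)
  then show "x = y" using Sinj by (simp add: inj_eq)
qed

lemma Uneg: "U eps (- x) = - U eps x"
proof -
  have "G (0::vec4, -x) = - G (0,x)" using linear_neg[OF linG, of "(0,x)"] by simp
  then show ?thesis by (simp add: U_def)
qed

lemma JJe: "Je eps (Je eps x) = - x"
proof (rule Uinj)
  show "U eps (Je eps (Je eps x)) = U eps (- x)"
    by (simp add: UJ sq1 Uneg)
qed

lemma pUU: "phi_pair (U eps \<alpha>) (U eps \<beta>) = eps * (\<beta> \<bullet> S \<alpha>)"
proof -
  have "phi_pair (U eps \<alpha>) (U eps \<beta>) = phi_pair (0,\<alpha>) (0,\<beta>) + eps * phi_pair (0,\<alpha>) (G (0,\<beta>))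
     + eps * phi_pair (G (0,\<alpha>)) (0,\<beta>) + eps * eps * phi_pair (G (0,\<alpha>)) (G (0,\<beta>))"
    by (simp add: U_def pp_add_left pp_add_right pp_scale_left pp_scale_right algebra_simps)
  also have "\<dots> = eps * (\<beta> \<bullet> S \<alpha>)"
  proof -
    have e1: "phi_pair (0,\<alpha>) (G (0,\<beta>)) = (\<beta> \<bullet> S \<alpha>) / 2"
      using pGsym[of "(0,\<alpha>)" "(0,\<beta>)"] hS by simp
    have e2: "phi_pair (G (0,\<alpha>)) (G (0,\<beta>)) = 0" by (simp only: pGG pp_L)
    show ?thesis by (simp only: e1 e2 hS pp_L eps)
  qed
  finally show ?thesis .
qed

lemma Jorth: "Je eps y \<bullet> S (Je eps x) = y \<bullet> S x"
proof -
  have "eps * (Je eps y \<bullet> S (Je eps x)) = eps * (y \<bullet> S x)"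
    using pUU[of "Je eps x" "Je eps y"] pUU[of x y] by (simp only: UJ pK1)
  moreover have "eps \<noteq> 0" using eps by auto
  ultimately show ?thesis by simp
qed

end
end
lemma dim2:
  fixes S J K :: "real^4 \<Rightarrow> real^4"
  assumes lS: "linear S" and lJ: "linear J" and lK: "linear K"
    and sym: "\<And>x y. y \<bullet> S x = x \<bullet> S y"
    and pos: "\<And>x. x \<noteq> 0 \<Longrightarrow> x \<bullet> S x > 0"
    and JJ: "\<And>x. J (J x) = - x" and KK: "\<And>x. K (K x) = - x"
    and Jo: "\<And>x y. J y \<bullet> S (J x) = y \<bullet> S x"
    and a: "J a = K a" "a \<noteq> 0"
  shows "2 \<le> dim {x. J x = K x}"
proof -
  have Sm: "\<And>x. S (- x) = - S x" using linear_neg[OF lS] .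
  have skJ: "a \<bullet> S (J a) = 0"
  proof -
    have "a \<bullet> S (J a) = J a \<bullet> S (J (J a))" using Jo by metis
    also have "\<dots> = - (J a \<bullet> S a)" by (simp add: JJ Sm)
    also have "\<dots> = - (a \<bullet> S (J a))" using sym by metis
    finally show ?thesis by simp
  qed
  have skJ': "J a \<bullet> S a = 0" using skJ sym by metis
  have pa: "a \<bullet> S a > 0" using pos a by simp
  have Jnz: "J a \<noteq> 0" by (metis JJ linear_0[OF lJ] neg_equal_0_iff_equal a(2))
  have pb: "J a \<bullet> S (J a) > 0" using pos Jnz by simp
  have ne: "a \<noteq> J a" using skJ pa by auto
  have ind: "independent {a, J a}"
    by (rule indep_orth[OF lS]) (use pa pb skJ skJ' in auto)
  have sub: "{a, J a} \<subseteq> {x. J x = K x}"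
  proof -
    have "J (J a) = K (J a)" using JJ KK a(1) by metis
    then show ?thesis using a(1) by simp
  qed
  have "card {a, J a} \<le> dim {x. J x = K x}"
    by (rule independent_card_le_dim[OF sub ind])
  then show ?thesis using ne by simp
qed

lemma gk_ann:
  assumes lK: "linear K" and sk: "\<And>a b. phi_pair (K a) b + phi_pair a (K b) = 0"
  shows "{\<alpha>::vec4. \<forall>x \<in> range (gc_R K). \<alpha> \<bullet> x = 0} = {\<alpha>. gc_R K \<alpha> = 0}"
    and "\<And>\<alpha> \<beta>. \<beta> \<bullet> gc_R K \<alpha> = - (\<alpha> \<bullet> gc_R K \<beta>)"
proof -
  have skw: "\<beta> \<bullet> gc_R K \<alpha> = - (\<alpha> \<bullet> gc_R K \<beta>)" for \<alpha> \<beta>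
    using sk[of "(0,\<alpha>)" "(0,\<beta>)"] by (simp add: phi_pair_def gc_R_def)
  then show "\<And>\<alpha> \<beta>. \<beta> \<bullet> gc_R K \<alpha> = - (\<alpha> \<bullet> gc_R K \<beta>)" .
  show "{\<alpha>::vec4. \<forall>x \<in> range (gc_R K). \<alpha> \<bullet> x = 0} = {\<alpha>. gc_R K \<alpha> = 0}"
  proof (intro set_eqI iffI; simp)
    fix \<alpha> assume h: "\<forall>x. \<alpha> \<bullet> gc_R K x = 0"
    have "gc_R K \<alpha> \<bullet> gc_R K \<alpha> = 0" using h skw by (metis neg_equal_0_iff_equal)
    then show "gc_R K \<alpha> = 0" by simp
  next
    fix \<alpha> assume "gc_R K \<alpha> = 0"
    then show "\<forall>x. \<alpha> \<bullet> gc_R K x = 0" using skw by (metis inner_zero_right neg_0_equal_iff_equal)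
  qed
qed

lemma v1: "(a::real^4) - b = - a - b \<longleftrightarrow> a = 0"
proof
  assume "a - b = - a - b"
  then have "a + a = 0" by (simp add: algebra_simps)
  then have "2 *\<^sub>R a = 0" by (simp add: scaleR_2)
  then show "a = 0" by simp
qed simp
lemma v2: "(a::real^4) - b = a + b \<longleftrightarrow> b = 0"
proof
  assume "a - b = a + b"
  then have "b + b = 0" by (simp add: algebra_simps)
  then have "2 *\<^sub>R b = 0" by (simp add: scaleR_2)
  then show "b = 0" by simp
qed simp
lemma v3: "(a::real^4) = - a \<Longrightarrow> a = 0"
proof -
  assume "a = - a"
  then have "a + a = 0" by (metis add.right_inverse)
  then have "2 *\<^sub>R a = 0" by (simp add: scaleR_2)
  then show "a = 0" by simp
qed
theorem proposition4p1:
  fixes br :: "vec4 \<Rightarrow> vec4 \<Rightarrow> vec4" and K1 K2 :: "phi4 \<Rightarrow> phi4"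
  assumes "lie_algebra br"
    and "gen_kahler br K1 K2"
    and "gc_type K1 \<noteq> 2" and "gc_type K2 \<noteq> 2"
  shows "(gc_type K1 = 0 \<and> gc_type K2 = 0) \<or>
         (gc_type K1 = 1 \<and> gc_type K2 = 1 \<and> range (gc_R K1) \<inter> range (gc_R K2) = {0})"
proof -
  have gc1: "gen_complex br K1" and gc2: "gen_complex br K2"
    and cm: "\<forall>a. K1 (K2 a) = K2 (K1 a)" and ps: "\<forall>a. a \<noteq> 0 \<longrightarrow> phi_pair (K1 (K2 a)) a > 0"
    using assms(2) unfolding gen_kahler_def by blast+
  have A1: "linear K1" "\<forall>a. K1 (K1 a) = - a" "\<forall>a b. phi_pair (K1 a) b + phi_pair a (K1 b) = 0"
    using gc1 unfolding gen_complex_def by blast+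
  have A2: "linear K2" "\<forall>a. K2 (K2 a) = - a" "\<forall>a b. phi_pair (K2 a) b + phi_pair a (K2 b) = 0"
    using gc2 unfolding gen_complex_def by blast+
  interpret gk K1 K2
  proof (rule gk.intro)
    show "linear K1" by (fact A1(1))
    show "linear K2" by (fact A2(1))
    show "\<And>a. K1 (K1 a) = - a" using A1(2) by blast
    show "\<And>a. K2 (K2 a) = - a" using A2(2) by blast
    show "\<And>a b. phi_pair (K1 a) b + phi_pair a (K1 b) = 0" using A1(3) by blast
    show "\<And>a b. phi_pair (K2 a) b + phi_pair a (K2 b) = 0" using A2(3) by blast
    show "\<And>a. K1 (K2 a) = K2 (K1 a)" using cm by blast
    show "\<And>a. a \<noteq> 0 \<Longrightarrow> phi_pair (K1 (K2 a)) a > 0" using ps by blast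
  qed
  define R1 where "R1 = gc_R K1"
  define R2 where "R2 = gc_R K2"
  define N1 where "N1 = {x. R1 x = 0}"
  define N2 where "N2 = {x. R2 x = 0}"
  have lK1: "linear K1" and lK2: "linear K2" using A1 A2 by simp_all
  have skK1: "\<And>a b. phi_pair (K1 a) b + phi_pair a (K1 b) = 0"
    and skK2: "\<And>a b. phi_pair (K2 a) b + phi_pair a (K2 b) = 0"
    using A1 A2 by blast+
  have t1: "gc_type K1 = dim N1 div 2"
    unfolding gc_type_def N1_def R1_def using gk_ann(1)[OF lK1 skK1] by simp
  have t2: "gc_type K2 = dim N2 div 2"
    unfolding gc_type_def N2_def R2_def using gk_ann(1)[OF lK2 skK2] by simp
  have skw1: "\<And>\<alpha> \<beta>. \<beta> \<bullet> R1 \<alpha> = - (\<alpha> \<bullet> R1 \<beta>)" unfolding R1_def by (rule gk_ann(2)[OF lK1 skK1])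
  have skw2: "\<And>\<alpha> \<beta>. \<beta> \<bullet> R2 \<alpha> = - (\<alpha> \<bullet> R2 \<beta>)" unfolding R2_def by (rule gk_ann(2)[OF lK2 skK2])
  have lR1: "linear R1" and lR2: "linear R2" unfolding R1_def R2_def using linR lK1 lK2 by auto
  have sN1: "subspace N1" and sN2: "subspace N2"
    unfolding N1_def N2_def using linear_subspace_kernel lR1 lR2 by auto
  have dimU: "dim (UNIV :: vec4 set) = 4" by (simp add: dim_UNIV)
  have nU1: "N1 \<noteq> UNIV" using assms(3) t1 dimU by auto
  have nU2: "N2 \<noteq> UNIV" using assms(4) t2 dimU by auto
  define Jp where "Jp = Je 1"
  define Jm where "Jm = Je (-1)"
  define Jn where "Jn = (\<lambda>x. - Jm x)"
  have e1: "(1::real) * 1 = 1" and e2: "(-1::real) * (-1) = 1" by simp_all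
  have lJp: "linear Jp" and lJm: "linear Jm" unfolding Jp_def Jm_def by (simp_all add: linJe)
  have lJn: "linear Jn" unfolding Jn_def using lJm by (simp add: linear_compose_neg)
  have JJp: "\<And>x. Jp (Jp x) = - x" unfolding Jp_def using JJe[OF e1] .
  have JJm: "\<And>x. Jm (Jm x) = - x" unfolding Jm_def using JJe[OF e2] .
  have JJn: "\<And>x. Jn (Jn x) = - x" unfolding Jn_def using JJm linear_neg[OF lJm] by simp
  have Jop: "\<And>x y. Jp y \<bullet> S (Jp x) = y \<bullet> S x" unfolding Jp_def using Jorth[OF e1] .
  have Jom: "\<And>x y. Jm y \<bullet> S (Jm x) = y \<bullet> S x" unfolding Jm_def using Jorth[OF e2] .
  have Jon: "\<And>x y. Jn y \<bullet> S (Jn x) = y \<bullet> S x" unfolding Jn_def using Jom linear_neg[OF linS] by simp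
  have SJp: "S (Jp x) = R1 x - R2 x" for x by (simp add: Jp_def Je_def SSi R1_def R2_def)
  have SJm: "S (Jm x) = - R1 x - R2 x" for x by (simp add: Jm_def Je_def SSi R1_def R2_def)
  have SJn: "S (Jn x) = R1 x + R2 x" for x by (simp add: Jn_def linear_neg[OF linS] SJm)
  have E1: "Jp x = Jm x \<longleftrightarrow> x \<in> N1" for x
  proof -
    have "Jp x = Jm x \<longleftrightarrow> S (Jp x) = S (Jm x)" using Sinj by (simp add: inj_eq)
    also have "\<dots> \<longleftrightarrow> R1 x = 0" unfolding SJp SJm
      by (rule v1)
    finally show ?thesis by (simp add: N1_def)
  qed
  have E2: "Jp x = Jn x \<longleftrightarrow> x \<in> N2" for x
  proof -
    have "Jp x = Jn x \<longleftrightarrow> S (Jp x) = S (Jn x)" using Sinj by (simp add: inj_eq)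
    also have "\<dots> \<longleftrightarrow> R2 x = 0" unfolding SJp SJn
      by (rule v2)
    finally show ?thesis by (simp add: N2_def)
  qed
  have En1: "Jp x = - Jm x \<longleftrightarrow> x \<in> N2" for x using E2[of x] by (simp add: Jn_def)
  have En2: "Jp x = - Jn x \<longleftrightarrow> x \<in> N1" for x using E1[of x] by (simp add: Jn_def)
  have int0: "N1 \<inter> N2 = {0}"
  proof (intro set_eqI iffI)
    fix x assume "x \<in> N1 \<inter> N2"
    then have "Jp x = Jm x" "Jp x = - Jm x" using E1 En1 by auto
    then have "Jm x = - Jm x" by simp
    then have "Jm x = 0" by (rule v3)
    then have "Jm (Jm x) = 0" using linear_0[OF lJm] by simp
    then show "x \<in> {0}" using JJm[of x] by simp
  qed (simp add: N1_def N2_def linear_0[OF lR1] linear_0[OF lR2])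
  have core1: "\<And>v. \<exists>e f. v = e + f \<and> e \<in> N1 \<and> f \<in> N2" if a: "a \<in> N1" "a \<noteq> 0" for a
  proof -
    fix v
    have "\<exists>x. Jp x \<noteq> Jm x" using nU1 E1 by blast
    from core[OF linS lJp lJm Ssym Spos JJp JJm Jop Jom _ a(2) this, of v] a(1) E1 En1
    show "\<exists>e f. v = e + f \<and> e \<in> N1 \<and> f \<in> N2" by blast
  qed
  have core2: "\<And>v. \<exists>e f. v = e + f \<and> e \<in> N2 \<and> f \<in> N1" if a: "a \<in> N2" "a \<noteq> 0" for a
  proof -
    fix v
    have "\<exists>x. Jp x \<noteq> Jn x" using nU2 E2 by blast
    from core[OF linS lJp lJn Ssym Spos JJp JJn Jop Jon _ a(2) this, of v] a(1) E2 En2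
    show "\<exists>e f. v = e + f \<and> e \<in> N2 \<and> f \<in> N1" by blast
  qed
  show ?thesis
  proof (cases "N1 = {0}")
    case True
    have "N2 = {0}"
    proof (rule ccontr)
      assume "N2 \<noteq> {0}"
      then obtain a where a: "a \<in> N2" "a \<noteq> 0" using sN2 subspace_0 by blast
      have "N2 = UNIV"
      proof (intro set_eqI iffI)
        fix v
        obtain e f where "v = e + f" "e \<in> N2" "f \<in> N1" using core2[OF a] by blast
        then show "v \<in> N2" using True by simp
      qed simp
      then show False using nU2 by simp
    qed
    then have "gc_type K1 = 0" "gc_type K2 = 0" using True t1 t2 by simp_all
    then show ?thesis by simp
  next
    case False
    then obtain a where a: "a \<in> N1" "a \<noteq> 0" using sN1 subspace_0 by blast
    have "N2 \<noteq> {0}"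
    proof
      assume N20: "N2 = {0}"
      have "N1 = UNIV"
      proof (intro set_eqI iffI)
        fix v
        obtain e f where "v = e + f" "e \<in> N1" "f \<in> N2" using core1[OF a] by blast
        then show "v \<in> N1" using N20 by simp
      qed simp
      then show False using nU1 by simp
    qed
    then obtain b where b: "b \<in> N2" "b \<noteq> 0" using sN2 subspace_0 by blast
    have d1: "2 \<le> dim N1"
    proof -
      have "{x. Jp x = Jm x} = N1" using E1 by auto
      moreover have "Jp a = Jm a" using E1 a by simp
      ultimately show ?thesis using dim2[OF linS lJp lJm Ssym Spos JJp JJm Jop _ a(2)] by simp
    qed
    have d2: "2 \<le> dim N2"
    proof -
      have "{x. Jp x = Jn x} = N2" using E2 by auto
      moreover have "Jp b = Jn b" using E2 b by simp
      ultimately show ?thesis using dim2[OF linS lJp lJn Ssym Spos JJp JJn Jop _ b(2)] by simp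
    qed
    have sumU: "{x + y |x y. x \<in> N1 \<and> y \<in> N2} = UNIV"
      using core1[OF a] by blast
    have "dim {x + y |x y. x \<in> N1 \<and> y \<in> N2} + dim (N1 \<inter> N2) = dim N1 + dim N2"
      by (rule dim_sums_Int[OF sN1 sN2])
    then have "dim N1 + dim N2 = 4" using sumU int0 dimU by simp
    then have "dim N1 = 2" "dim N2 = 2" using d1 d2 by auto
    then have ty: "gc_type K1 = 1" "gc_type K2 = 1" using t1 t2 by simp_all
    have "range R1 \<inter> range R2 = {0}"
    proof (intro set_eqI iffI)
      fix x assume "x \<in> range R1 \<inter> range R2"
      then obtain \<alpha> \<beta> where x1: "x = R1 \<alpha>" and x2: "x = R2 \<beta>" by blast
      obtain e f where ef: "x = e + f" "e \<in> N1" "f \<in> N2" using core1[OF a] by blast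
      have "e \<bullet> x = 0" using x1 skw1[of \<alpha> e] ef(2) by (simp add: N1_def)
      moreover have "f \<bullet> x = 0" using x2 skw2[of \<beta> f] ef(3) by (simp add: N2_def)
      ultimately have "x \<bullet> x = 0" using ef(1) by (simp add: inner_add_left)
      then show "x \<in> {0}" by simp
    next
      fix x :: vec4 assume "x \<in> {0}"
      then show "x \<in> range R1 \<inter> range R2"
        using linear_0[OF lR1] linear_0[OF lR2] by (metis IntI rangeI singletonD)
    qed
    then show ?thesis using ty by (simp add: R1_def R2_def)
  qed
qed
end
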